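(* For all integers $n\ge k\ge0$, $$a_{2n+1,k}=\frac{1}{2^k}\sum_{i=0}^{\lfloor k/2\rfloor}(-1)^i\frac{n-k+2i}{n-k+i}\binom{n-k+i}{i}A_{2n+1,k-2i},$$ $$a_{2n+2,k}=\frac{1}{2^k}\sum_{\substack{i,j,r\ge0\\ 2i+j+r=k}}(-1)^{r+i}\frac{n-k+2i}{n-k+i}\binom{n-k+i}{i}A_{2n+2,j},$$ where the factor $\frac{n-k+2i}{n-k+i}\binom{n-k+i}{i}$ is interpreted as $1$ when $n-k+i=0$ (i.e. $k=n$, $i=0$).
   Context: For a permutation $\pi=a_1\cdots a_n$ of $[n]$, an index $i\in[n-1]$ is a descent if $a_i>a_{i+1}$. $A_{n,k}$ (Eulerian number) is the number of $\pi\in\mathfrak S_n$ with exactly $k$ descents. $a_{n,k}$ is the number of $\pi\in\mathfrak S_n$ having exactly $k$ descents at even positions and no descents at odd positions. *)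

theory Defs
  imports Complex_Main "HOL-Combinatorics.Multiset_Permutations"
begin

text \<open>A permutation pi = a_1 ... a_n of [n] is a list xs with xs ! (i-1) = a_i.
  Index i in [n-1] (1-based) is a descent if a_i > a_(i+1).\<close>
definition descents :: "nat list \<Rightarrow> nat set" where
  "descents xs = {i \<in> {1..<length xs}. xs ! (i - 1) > xs ! i}"

definition eulerian :: "nat \<Rightarrow> nat \<Rightarrow> nat" where
  "eulerian n k = card {xs \<in> permutations_of_set {1..n}. card (descents xs) = k}"

definition even_desc :: "nat \<Rightarrow> nat \<Rightarrow> nat" where
  "even_desc n k = card {xs \<in> permutations_of_set {1..n}.
      (\<forall>i \<in> descents xs. even i) \<and> card (descents xs) = k}"

definition coef :: "nat \<Rightarrow> nat \<Rightarrow> real" where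
  "coef m i = (if m + i = 0 then 1
     else (real (m + 2*i) / real (m + i)) * real ((m + i) choose i))"

end

theory Submission
  imports Defs "HOL-Computational_Algebra.Formal_Power_Series"
begin

unbundle fps_syntax

lemma descents_sub: "descents xs \<subseteq> {1..<length xs}"
  unfolding descents_def by auto

lemma descents_app:
  fixes L R :: "nat list" and m :: nat
  assumes "\<forall>x\<in>set L. x < m" "\<forall>x\<in>set R. x < m"
  shows "descents (L @ m # R) = descents L \<union> (if R = [] then {} else {Suc (length L)})
           \<union> (\<lambda>i. i + Suc (length L)) ` descents R"
proof (intro set_eqI iffI)
  fix i assume "i \<in> descents (L @ m # R)"
  then have i: "1 \<le> i" "i < length L + Suc (length R)" "(L @ m # R) ! (i - 1) > (L @ m # R) ! i"
    unfolding descents_def by auto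
  consider "i < length L" | "i = length L" | "i = Suc (length L)" | "i > Suc (length L)" by linarith
  then show "i \<in> descents L \<union> (if R = [] then {} else {Suc (length L)})
           \<union> (\<lambda>i. i + Suc (length L)) ` descents R"
  proof cases
    case 1 then have "i - 1 < length L" by simp
    then show ?thesis using i 1 by (auto simp: descents_def nth_append)
  next
    case 2 then have "i - 1 < length L" using i by simp
    then have "L ! (i - 1) \<in> set L" by simp
    moreover have "(L @ m # R) ! (i-1) = L!(i-1)" "(L @ m # R) ! i = m"
      using 2 \<open>i - 1 < length L\<close> by (auto simp: nth_append)
    ultimately show ?thesis using i assms by auto
  next
    case 3 then show ?thesis using i by auto
  next
    case 4
    then have "i - Suc (length L) \<in> descents R" using i
      by (auto simp: descents_def nth_append nth_Cons' split: if_splits)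
    moreover have "i = (i - Suc (length L)) + Suc (length L)" using 4 by simp
    ultimately show ?thesis by blast
  qed
next
  fix i assume "i \<in> descents L \<union> (if R = [] then {} else {Suc (length L)})
           \<union> (\<lambda>i. i + Suc (length L)) ` descents R"
  then consider "i \<in> descents L" | "R \<noteq> []" "i = Suc (length L)"
    | j where "j \<in> descents R" "i = j + Suc (length L)" by (auto split: if_splits)
  then show "i \<in> descents (L @ m # R)"
  proof cases
    case 1 then show ?thesis by (auto simp: descents_def nth_append)
  next
    case 2 then have "R ! 0 \<in> set R" by simp
    then show ?thesis using 2 assms by (auto simp: descents_def nth_append)
  next
    case 3 then show ?thesis
      by (auto simp: descents_def nth_append nth_Cons' split: if_splits)
  qed
qed

lemma descents_map_mono:
  assumes "\<And>a b. a \<in> A \<Longrightarrow> b \<in> A \<Longrightarrow> f a < f b \<longleftrightarrow> a < b" "set xs \<subseteq> A"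
  shows "descents (map f xs) = descents xs"
  unfolding descents_def using assms by (auto simp: subset_iff)

lemma sum_perms_std:
  fixes w :: "nat set \<Rightarrow> real"
  assumes fin: "finite S"
  shows "(\<Sum>xs\<in>permutations_of_set S. w (descents xs))
       = (\<Sum>xs\<in>permutations_of_set {1..card S}. w (descents xs))"
proof -
  define ys where "ys = sorted_list_of_set S"
  define f where "f i = ys ! (i - 1)" for i
  have sw: "sorted_wrt (<) ys" and len: "length ys = card S" and sety: "set ys = S"
    using fin by (auto simp: ys_def)
  have mono: "f a < f b \<longleftrightarrow> a < b" if "a \<in> {1..card S}" "b \<in> {1..card S}" for a b
  proof
    assume "a < b" then show "f a < f b" using that sorted_wrt_nth_less[OF sw, of "a-1" "b-1"] len unfolding f_def
      by auto
  next
    assume fab: "f a < f b"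
    show "a < b"
    proof (rule ccontr)
      assume "\<not> a < b"
      then have "b < a \<or> b = a" by auto
      then show False
      proof
        assume "b < a" then have "f b < f a" using that sorted_wrt_nth_less[OF sw, of "b-1" "a-1"] len unfolding f_def
          by auto
        then show False using fab by simp
      qed (use fab in simp)
    qed
  qed
  have inj: "inj_on f {1..card S}"
    by (rule inj_onI) (metis mono less_irrefl linorder_neqE_nat)
  have img: "f ` {1..card S} = S"
  proof
    show "f ` {1..card S} \<subseteq> S" using len sety unfolding f_def by (auto)
    show "S \<subseteq> f ` {1..card S}"
    proof
      fix x assume "x \<in> S"
      then obtain i where "i < length ys" "ys ! i = x" using sety by (metis in_set_conv_nth)
      then show "x \<in> f ` {1..card S}" using len unfolding f_def
        by (intro image_eqI[of _ _ "Suc i"]) auto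
    qed
  qed
  have "permutations_of_set S = map f ` permutations_of_set {1..card S}"
    using permutations_of_set_image_inj[OF inj] img by simp
  moreover have "inj_on (map f) (permutations_of_set {1..card S})"
    by (rule inj_on_subset[OF inj_on_map_lists[OF inj]]) (rule permutations_of_set_lists)
  ultimately have "(\<Sum>xs\<in>permutations_of_set S. w (descents xs))
      = (\<Sum>xs\<in>permutations_of_set {1..card S}. w (descents (map f xs)))"
    by (simp add: sum.reindex)
  also have "\<dots> = (\<Sum>xs\<in>permutations_of_set {1..card S}. w (descents xs))"
    by (intro sum.cong refl arg_cong[where f=w])
       (rule descents_map_mono[OF mono]; auto simp: permutations_of_set_def)
  finally show ?thesis .
qed

lemma sum_perms_decomp:
  fixes F :: "nat list \<Rightarrow> real"
  shows "(\<Sum>xs\<in>permutations_of_set {1..Suc n}. F xs)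
    = (\<Sum>S\<in>Pow {1..n}. \<Sum>L\<in>permutations_of_set S. \<Sum>R\<in>permutations_of_set ({1..n} - S).
          F (L @ Suc n # R))"
proof -
  define T where "T = Sigma (Pow {1..n}) (\<lambda>S. permutations_of_set S \<times> permutations_of_set ({1..n} - S))"
  define g where "g = (\<lambda>(S::nat set,(L::nat list,R::nat list)). L @ Suc n # R)"
  have bij: "bij_betw g T (permutations_of_set {1..Suc n})"
  proof (rule bij_betwI')
    fix x y assume "x \<in> T" "y \<in> T"
    then obtain S L R S' L' R' where x: "x = (S,(L,R))" and y: "y = (S',(L',R'))"
      and h: "S \<subseteq> {1..n}" "set L = S" "set R = {1..n} - S"
       "S' \<subseteq> {1..n}" "set L' = S'" "set R' = {1..n} - S'"
      unfolding T_def by (auto simp: permutations_of_set_def)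
    have nL: "Suc n \<notin> set L" "Suc n \<notin> set R" using h by auto
    show "(g x = g y) = (x = y)"
    proof
      assume "g x = g y"
      then have "L @ Suc n # R = L' @ Suc n # R'" by (simp add: g_def x y)
      then have "L = L' \<and> R = R'" using append_Cons_eq_iff[OF nL] by simp
      then show "x = y" using x y h by auto
    qed simp
  next
    fix x assume "x \<in> T"
    then obtain S L R where x: "x = (S,(L,R))"
      and h: "S \<subseteq> {1..n}" "set L = S" "set R = {1..n} - S" "distinct L" "distinct R"
      unfolding T_def by (auto simp: permutations_of_set_def)
    have "set (L @ Suc n # R) = {1..Suc n}" using h by auto
    moreover have "distinct (L @ Suc n # R)" using h by auto
    ultimately show "g x \<in> permutations_of_set {1..Suc n}" by (simp add: g_def x permutations_of_set_def)
  next
    fix xs assume "xs \<in> permutations_of_set {1..Suc n}"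
    then have s: "set xs = {1..Suc n}" and d: "distinct xs" by (auto simp: permutations_of_set_def)
    then have "Suc n \<in> set xs" by auto
    then obtain L R where xs: "xs = L @ Suc n # R" by (meson split_list)
    have sLR: "insert (Suc n) (set L \<union> set R) = {1..Suc n}" using s xs by simp
    have nots: "Suc n \<notin> set L" "Suc n \<notin> set R" "set L \<inter> set R = {}" "distinct L" "distinct R"
      using d xs by auto
    have "set L \<union> set R = {1..Suc n} - {Suc n}" using sLR nots by blast
    also have "{1..Suc n} - {Suc n} = {1..n}" by auto
    finally have u: "set L \<union> set R = {1..n}" .
    have "set L \<subseteq> {1..n}" "set R = {1..n} - set L" "distinct L" "distinct R"
      using u nots by auto
    then have "(set L, (L, R)) \<in> T" unfolding T_def by (auto simp: permutations_of_set_def)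
    then show "\<exists>x\<in>T. xs = g x" using xs by (intro bexI[of _ "(set L, (L, R))"]) (auto simp: g_def)
  qed
  have "(\<Sum>xs\<in>permutations_of_set {1..Suc n}. F xs) = (\<Sum>x\<in>T. F (g x))"
    using sum.reindex_bij_betw[OF bij, of F] by simp
  also have "\<dots> = (\<Sum>S\<in>Pow {1..n}. \<Sum>p\<in>permutations_of_set S \<times> permutations_of_set ({1..n} - S). F (g (S,p)))"
    unfolding T_def by (subst sum.Sigma) (auto simp: case_prod_unfold)
  also have "\<dots> = (\<Sum>S\<in>Pow {1..n}. \<Sum>L\<in>permutations_of_set S. \<Sum>R\<in>permutations_of_set ({1..n} - S).
          F (L @ Suc n # R))"
    by (simp add: sum.cartesian_product g_def case_prod_unfold)
  finally show ?thesis .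
qed

lemma sum_Pow_card:
  fixes h :: "nat \<Rightarrow> real"
  assumes "finite A"
  shows "(\<Sum>S\<in>Pow A. h (card S)) = (\<Sum>j\<le>card A. real (card A choose j) * h j)"
proof -
  have "(\<Sum>S\<in>Pow A. h (card S)) = (\<Sum>j\<le>card A. \<Sum>S\<in>{S\<in>Pow A. card S = j}. h (card S))"
    by (rule sum.group[symmetric]) (use assms card_mono in \<open>auto\<close>)
  also have "\<dots> = (\<Sum>j\<le>card A. real (card A choose j) * h j)"
  proof (rule sum.cong[OF refl])
    fix j
    have "(\<Sum>S\<in>{S\<in>Pow A. card S = j}. h (card S)) = (\<Sum>S\<in>{S\<in>Pow A. card S = j}. h j)"
      by (rule sum.cong) auto
    also have "\<dots> = real (card {S. S \<subseteq> A \<and> card S = j}) * h j" by simp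
    also have "\<dots> = real (card A choose j) * h j" using n_subsets[OF assms] by simp
    finally show "(\<Sum>S\<in>{S\<in>Pow A. card S = j}. h (card S)) = real (card A choose j) * h j" .
  qed
  finally show ?thesis .
qed

definition cnt :: "(nat set \<Rightarrow> real) \<Rightarrow> nat \<Rightarrow> real" where
  "cnt w m = (\<Sum>xs\<in>permutations_of_set {1..m}. w (descents xs))"

lemma cnt_rec:
  assumes fac: "\<And>L R. \<forall>x\<in>set L. x < Suc n \<Longrightarrow> \<forall>x\<in>set R. x < Suc n \<Longrightarrow>
     w (descents (L @ Suc n # R)) = w (descents L) * c (length L) (length R) * w (descents R)"
  shows "cnt w (Suc n) = (\<Sum>j\<le>n. real (n choose j) * cnt w j * c j (n - j) * cnt w (n - j))"
proof -
  have "cnt w (Suc n) = (\<Sum>S\<in>Pow {1..n}. \<Sum>L\<in>permutations_of_set S. \<Sum>R\<in>permutations_of_set ({1..n} - S).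
          w (descents (L @ Suc n # R)))"
    unfolding cnt_def by (rule sum_perms_decomp)
  also have "\<dots> = (\<Sum>S\<in>Pow {1..n}. cnt w (card S) * c (card S) (n - card S) * cnt w (n - card S))"
  proof (rule sum.cong[OF refl])
    fix S assume S: "S \<in> Pow {1..n}"
    then have fS: "finite S" using finite_subset by blast
    have cS: "card ({1..n} - S) = n - card S" using S by (auto simp: card_Diff_subset fS)
    have "(\<Sum>L\<in>permutations_of_set S. \<Sum>R\<in>permutations_of_set ({1..n} - S).
          w (descents (L @ Suc n # R)))
      = (\<Sum>L\<in>permutations_of_set S. \<Sum>R\<in>permutations_of_set ({1..n} - S).
          w (descents L) * c (card S) (n - card S) * w (descents R))"
    proof (intro sum.cong refl)
      fix L R assume L: "L \<in> permutations_of_set S" and R: "R \<in> permutations_of_set ({1..n} - S)"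
      have "length L = card S" "length R = n - card S"
        using length_finite_permutations_of_set[OF L] length_finite_permutations_of_set[OF R] cS by auto
      moreover have "\<forall>x\<in>set L. x < Suc n" "\<forall>x\<in>set R. x < Suc n"
        using L R S by (auto simp: permutations_of_set_def)
      ultimately show "w (descents (L @ Suc n # R)) = w (descents L) * c (card S) (n - card S) * w (descents R)"
        using fac by simp
    qed
    also have "\<dots> = (\<Sum>L\<in>permutations_of_set S. w (descents L)) * c (card S) (n - card S)
        * (\<Sum>R\<in>permutations_of_set ({1..n} - S). w (descents R))"
      by (simp add: mult.assoc sum_distrib_left[symmetric] sum_distrib_right[symmetric])
    also have "\<dots> = cnt w (card S) * c (card S) (n - card S) * cnt w (n - card S)"
      unfolding cnt_def using sum_perms_std[OF fS, of w] sum_perms_std[of "{1..n} - S" w] cS by simp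
    finally show "(\<Sum>L\<in>permutations_of_set S. \<Sum>R\<in>permutations_of_set ({1..n} - S).
          w (descents (L @ Suc n # R))) = cnt w (card S) * c (card S) (n - card S) * cnt w (n - card S)" .
  qed
  also have "\<dots> = (\<Sum>j\<le>n. real (n choose j) * (cnt w j * c j (n - j) * cnt w (n - j)))"
    using sum_Pow_card[of "{1..n}" "\<lambda>j. cnt w j * c j (n - j) * cnt w (n - j)"] by simp
  finally show ?thesis by (simp add: mult.assoc)
qed

lemma descents_Nil[simp]: "descents [] = {}" by (simp add: descents_def)

definition wA :: "real \<Rightarrow> nat set \<Rightarrow> real" where "wA t D = t ^ card D"
definition wa :: "real \<Rightarrow> nat set \<Rightarrow> real" where
  "wa s D = (if \<forall>i\<in>D. even i then s ^ card D else 0)"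

lemma card_desc_app:
  fixes L R :: "nat list"
  assumes "\<forall>x\<in>set L. x < m" "\<forall>x\<in>set R. x < m"
  shows "card (descents (L @ m # R)) = card (descents L) + (if R = [] then 0 else 1) + card (descents R)"
proof -
  have fin: "finite (descents xs)" for xs :: "nat list"
    using descents_sub finite_subset by blast
  have d1: "descents L \<subseteq> {1..<length L}" by (rule descents_sub)
  have d2: "(\<lambda>i. i + Suc (length L)) ` descents R \<subseteq> {Suc (Suc (length L))..}"
    using descents_sub[of R] by auto
  have inj: "inj_on (\<lambda>i. i + Suc (length L)) (descents R)" by (auto intro: inj_onI)
  let ?A = "descents L" and ?B = "(if R = [] then {} else {Suc (length L)})"
    and ?C = "(\<lambda>i. i + Suc (length L)) ` descents R"
  have cB: "card ?B = (if R = [] then 0 else 1)" by simp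
  have "card (?A \<union> ?B \<union> ?C) = card (?A \<union> ?B) + card ?C"
    by (rule card_Un_disjoint) (use d1 d2 fin in \<open>auto split: if_splits\<close>)
  also have "card (?A \<union> ?B) = card ?A + card ?B"
    by (rule card_Un_disjoint) (use d1 fin in \<open>auto split: if_splits\<close>)
  finally show ?thesis
    unfolding descents_app[OF assms] cB card_image[OF inj] by simp
qed

lemma wA_fac:
  assumes "\<forall>x\<in>set L. x < Suc n" "\<forall>x\<in>set R. x < Suc n"
  shows "wA t (descents (L @ Suc n # R)) = wA t (descents L) * (if length R = 0 then 1 else t) * wA t (descents R)"
  unfolding wA_def card_desc_app[OF assms] by (simp add: power_add)

lemma wa_fac:
  assumes "\<forall>x\<in>set L. x < Suc n" "\<forall>x\<in>set R. x < Suc n"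
  shows "wa s (descents (L @ Suc n # R)) = wa s (descents L) *
     (if length R = 0 then 1 else if odd (length L) then s else 0) * wa s (descents R)"
proof -
  have ev: "(\<forall>i\<in>descents (L @ Suc n # R). even i) \<longleftrightarrow>
     (\<forall>i\<in>descents L. even i) \<and> (R \<noteq> [] \<longrightarrow> odd (length L)) \<and>
     (R \<noteq> [] \<longrightarrow> (\<forall>i\<in>descents R. even i))"
  proof (cases "R = []")
    case True then show ?thesis unfolding descents_app[OF assms] by simp
  next
    case False
    show ?thesis
    proof (cases "odd (length L)")
      case True
      then have e: "\<And>x. even (Suc (x + length L)) \<longleftrightarrow> even x" by simp
      show ?thesis unfolding descents_app[OF assms] using False True by (auto simp: e ball_Un)
    next
      case F2: False
      then show ?thesis unfolding descents_app[OF assms] using False by auto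
    qed
  qed
  show ?thesis
    unfolding wa_def card_desc_app[OF assms] ev by (auto simp: power_add)
qed

lemma cnt_A_rec:
  "cnt (wA t) (Suc n) = (\<Sum>j\<le>n. real (n choose j) * cnt (wA t) j * (if n - j = 0 then 1 else t) * cnt (wA t) (n - j))"
  by (rule cnt_rec) (rule wA_fac)

lemma cnt_a_rec:
  "cnt (wa s) (Suc n) = (\<Sum>j\<le>n. real (n choose j) * cnt (wa s) j *
      (if n - j = 0 then 1 else if odd j then s else 0) * cnt (wa s) (n - j))"
  by (rule cnt_rec) (rule wa_fac)

lemma cnt_0: "cnt w 0 = w {}"
  by (simp add: cnt_def descents_def)

lemma eulerian_poly: "cnt (wA t) N = (\<Sum>k\<le>N. real (eulerian N k) * t ^ k)"
proof -
  let ?P = "permutations_of_set {1..N}"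
  have le: "card (descents xs) \<le> N" if "xs \<in> ?P" for xs
  proof -
    have "card (descents xs) \<le> card {1..<length xs}" using descents_sub[of xs] by (intro card_mono) auto
    then show ?thesis using length_finite_permutations_of_set[OF that] by simp
  qed
  have "cnt (wA t) N = (\<Sum>k\<le>N. \<Sum>xs\<in>{xs\<in>?P. card (descents xs) = k}. wA t (descents xs))"
    unfolding cnt_def by (rule sum.group[symmetric]) (use le in auto)
  also have "\<dots> = (\<Sum>k\<le>N. real (eulerian N k) * t ^ k)"
    by (intro sum.cong refl) (simp add: wA_def eulerian_def)
  finally show ?thesis .
qed

lemma even_desc_poly: "cnt (wa s) N = (\<Sum>k\<le>N. real (even_desc N k) * s ^ k)"
proof -
  let ?P = "permutations_of_set {1..N}"
  let ?Q = "{xs\<in>?P. \<forall>i\<in>descents xs. even i}"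
  have le: "card (descents xs) \<le> N" if "xs \<in> ?P" for xs
  proof -
    have "card (descents xs) \<le> card {1..<length xs}" using descents_sub[of xs] by (intro card_mono) auto
    then show ?thesis using length_finite_permutations_of_set[OF that] by simp
  qed
  have "cnt (wa s) N = (\<Sum>xs\<in>?Q. s ^ card (descents xs))"
    unfolding cnt_def wa_def by (simp add: sum.inter_filter[symmetric])
  also have "\<dots> = (\<Sum>k\<le>N. \<Sum>xs\<in>{xs\<in>?Q. card (descents xs) = k}. s ^ card (descents xs))"
    by (rule sum.group[symmetric]) (use le in auto)
  also have "\<dots> = (\<Sum>k\<le>N. real (even_desc N k) * s ^ k)"
  proof (intro sum.cong refl)
    fix k
    have "{xs\<in>?Q. card (descents xs) = k} = {xs \<in> ?P. (\<forall>i \<in> descents xs. even i) \<and> card (descents xs) = k}"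
      by auto
    then show "(\<Sum>xs\<in>{xs\<in>?Q. card (descents xs) = k}. s ^ card (descents xs)) = real (even_desc N k) * s ^ k"
      by (simp add: even_desc_def)
  qed
  finally show ?thesis .
qed

definition fev :: "real fps \<Rightarrow> bool" where "fev F \<longleftrightarrow> (\<forall>n. odd n \<longrightarrow> F $ n = 0)"
definition fod :: "real fps \<Rightarrow> bool" where "fod F \<longleftrightarrow> (\<forall>n. even n \<longrightarrow> F $ n = 0)"

lemma par_aux: "i \<le> (n::nat) \<Longrightarrow> (odd (n - i) \<longleftrightarrow> (odd n \<longleftrightarrow> even i))"
  by (simp add: even_diff_nat) (metis even_add)

lemma fev_mult: "fev F \<Longrightarrow> fev G \<Longrightarrow> fev (F * G)"
  unfolding fev_def fps_mult_nth
  by (intro allI impI sum.neutral ballI) (metis atLeastAtMost_iff mult_eq_0_iff par_aux)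
lemma fod_mult: "fod F \<Longrightarrow> fod G \<Longrightarrow> fev (F * G)"
  unfolding fev_def fod_def fps_mult_nth
  by (intro allI impI sum.neutral ballI) (metis atLeastAtMost_iff mult_eq_0_iff par_aux)
lemma fev_fod_mult: "fev F \<Longrightarrow> fod G \<Longrightarrow> fod (F * G)"
  unfolding fev_def fod_def fps_mult_nth
  by (intro allI impI sum.neutral ballI) (metis atLeastAtMost_iff mult_eq_0_iff par_aux)
lemma fod_fev_mult: "fod F \<Longrightarrow> fev G \<Longrightarrow> fod (F * G)"
  unfolding fev_def fod_def fps_mult_nth
  by (intro allI impI sum.neutral ballI) (metis atLeastAtMost_iff mult_eq_0_iff par_aux)
lemma fev_add: "fev F \<Longrightarrow> fev G \<Longrightarrow> fev (F + G)" unfolding fev_def by auto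
lemma fod_add: "fod F \<Longrightarrow> fod G \<Longrightarrow> fod (F + G)" unfolding fod_def by auto
lemma fev_diff: "fev F \<Longrightarrow> fev G \<Longrightarrow> fev (F - G)" unfolding fev_def by auto
lemma fod_diff: "fod F \<Longrightarrow> fod G \<Longrightarrow> fod (F - G)" unfolding fod_def by auto
lemma fev_const: "fev (fps_const c)" unfolding fev_def by auto
lemma fev_1: "fev 1" unfolding fev_def by auto
lemma fev_deriv: "fev F \<Longrightarrow> fod (fps_deriv F)" unfolding fev_def fod_def by auto
lemma fod_deriv: "fod F \<Longrightarrow> fev (fps_deriv F)" unfolding fev_def fod_def by auto
lemma fev_fod_split:
  assumes "fev a" "fev c" "fod b" "fod d" "a + b = c + d"
  shows "a = c \<and> b = d"
proof -
  have "a $ n = c $ n \<and> b $ n = d $ n" for n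
  proof -
    have "a $ n + b $ n = c $ n + d $ n" using assms(5) by (metis fps_add_nth)
    then show ?thesis using assms(1-4) unfolding fev_def fod_def by (cases "even n") auto
  qed
  then show ?thesis by (simp add: fps_eq_iff)
qed

lemma riccati_unique:
  fixes A B :: "real fps"
  assumes "fps_deriv A = fps_const c * A * A + fps_const d * A"
      and "fps_deriv B = fps_const c * B * B + fps_const d * B"
      and "A $ 0 = B $ 0"
  shows "A = B"
proof -
  have "\<forall>m\<le>n. A $ m = B $ m" for n
  proof (induction n)
    case 0 then show ?case using assms(3) by simp
  next
    case (Suc n)
    have "fps_deriv A $ n = fps_deriv B $ n"
    proof -
      have "(A * A) $ n = (B * B) $ n" unfolding fps_mult_nth
        by (intro sum.cong refl) (use Suc in auto)
      then show ?thesis using Suc by (simp add: assms(1,2) mult.assoc del: fps_deriv_nth)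
    qed
    then have "A $ Suc n = B $ Suc n" by (simp del: of_nat_Suc)
    then show ?case using Suc by (auto simp: le_Suc_eq)
  qed
  then show ?thesis by (intro fps_ext) auto
qed

lemma linear_zero:
  fixes J K :: "real fps"
  assumes "fps_deriv J = K * J" "J $ 0 = 0"
  shows "J = 0"
proof -
  have "\<forall>m\<le>n. J $ m = 0" for n
  proof (induction n)
    case 0 then show ?case using assms(2) by simp
  next
    case (Suc n)
    have "(K * J) $ n = 0" unfolding fps_mult_nth
      by (intro sum.neutral) (use Suc in auto)
    then have "fps_deriv J $ n = 0" using assms(1) by simp
    then have "J $ Suc n = 0" by (simp del: of_nat_Suc)
    then show ?case using Suc by (auto simp: le_Suc_eq)
  qed
  then show ?thesis by (intro fps_ext) auto
qed

lemma binom_fact_real: "j \<le> m \<Longrightarrow> real (m choose j) / fact m = 1 / (fact j * fact (m - j))"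
  by (simp add: binomial_fact field_simps)

lemma U_ode:
  fixes t :: real and u :: "nat \<Rightarrow> real"
  assumes u0: "u 0 = 1"
    and urec: "\<And>m. u (Suc m) = (\<Sum>j\<le>m. real (m choose j) * u j * (if m - j = 0 then 1 else t) * u (m - j))"
  shows "fps_deriv (Abs_fps (\<lambda>n. u n / fact n)) =
     fps_const t * Abs_fps (\<lambda>n. u n / fact n) * Abs_fps (\<lambda>n. u n / fact n) + fps_const (1 - t) * Abs_fps (\<lambda>n. u n / fact n)"
proof (rule fps_ext)
  fix m
  let ?U = "Abs_fps (\<lambda>n. u n / fact n)"
  have "fps_deriv ?U $ m = u (Suc m) / fact m"
    by (simp add: field_simps del: of_nat_Suc)
  also have "\<dots> = (\<Sum>j\<le>m. real (m choose j) * u j * (if m - j = 0 then 1 else t) * u (m - j) / fact m)"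
    by (simp add: urec sum_divide_distrib)
  also have "\<dots> = (\<Sum>j\<le>m. t * (u j / fact j * (u (m - j) / fact (m - j))) + (if j = m then (1 - t) * (u m / fact m) else 0))"
  proof (rule sum.cong[OF refl])
    fix j assume "j \<in> {..m}"
    then have jm: "j \<le> m" by simp
    have b: "real (m choose j) / fact m = 1 / (fact j * fact (m - j))" using binom_fact_real[OF jm] .
    show "real (m choose j) * u j * (if m - j = 0 then 1 else t) * u (m - j) / fact m =
        t * (u j / fact j * (u (m - j) / fact (m - j))) + (if j = m then (1 - t) * (u m / fact m) else 0)"
    proof (cases "j = m")
      case True then show ?thesis using u0 by (simp add: field_simps)
    next
      case False
      then have "m - j \<noteq> 0" using jm by simp
      then have "real (m choose j) * u j * (if m - j = 0 then 1 else t) * u (m - j) / fact m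
          = t * u j * u (m - j) * (real (m choose j) / fact m)" by simp
      also have "\<dots> = t * (u j / fact j * (u (m - j) / fact (m - j)))" using b by simp
      finally show ?thesis using False by simp
    qed
  qed
  also have "\<dots> = t * (\<Sum>j\<le>m. u j / fact j * (u (m - j) / fact (m - j))) + (1 - t) * (u m / fact m)"
    by (simp add: sum.distrib sum_distrib_left)
  also have "\<dots> = (fps_const t * ?U * ?U + fps_const (1 - t) * ?U) $ m"
    by (simp only: mult.assoc fps_add_nth fps_mult_left_const_nth) (simp add: fps_mult_nth atLeast0AtMost)
  finally show "fps_deriv ?U $ m = (fps_const t * ?U * ?U + fps_const (1 - t) * ?U) $ m" .
qed

lemma div2_aux1:
  assumes "odd j" "j < (m::nat)" shows "Suc m div 2 = Suc (j div 2 + (m - j) div 2)"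
proof -
  obtain a where a: "j = 2*a+1" using assms(1) oddE by blast
  have "m - j + j = m" using assms(2) by simp
  show ?thesis
  proof (cases "even m")
    case True
    then obtain b where b: "m = 2*b" by blast
    then have ab: "a < b" using a assms(2) by linarith
    have "m - j = 2*(b - a - 1) + 1" using a b ab by simp
    then show ?thesis using a b ab by simp
  next
    case False
    then obtain b where b: "m = 2*b+1" using oddE by blast
    then have ab: "a < b" using a assms(2) by linarith
    have "m - j = 2*(b - a)" using a b ab by simp
    then show ?thesis using a b ab by simp
  qed
qed
lemma div2_aux2: "odd (m::nat) \<Longrightarrow> Suc m div 2 = Suc (m div 2)"
  by (auto elim!: oddE)
lemma div2_aux3: "even (m::nat) \<Longrightarrow> Suc m div 2 = m div 2"
  by (auto elim!: evenE)

lemma alg1: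
  fixes q t a b c f A B Q :: real
  assumes q0: "q \<noteq> 0" and eq: "Q = A * B * q"
  shows "Q * (c * a * (2 * t / q) * b) / f = 2 * t * (A * a) * (B * b) * (c / f)"
  unfolding eq using q0 by (simp add: field_simps)

lemma W_ode:
  fixes t :: real and v :: "nat \<Rightarrow> real"
  assumes v0: "v 0 = 1"
    and vrec: "\<And>m. v (Suc m) = (\<Sum>j\<le>m. real (m choose j) * v j *
        (if m - j = 0 then 1 else if odd j then 2 * t / (1 + t^2) else 0) * v (m - j))"
    and Wd: "W = Abs_fps (\<lambda>n. (1 + t^2) ^ (n div 2) * v n / fact n)"
    and Od: "Po = Abs_fps (\<lambda>n. if odd n then W $ n else 0)"
    and Ed: "Pe = Abs_fps (\<lambda>n. if even n then W $ n else 0)"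
  shows "fps_deriv W = fps_const (2 * t) * Po * (W - 1) + fps_const (1 + t^2) * Po + Pe"
proof (rule fps_ext)
  fix m
  define q where "q = 1 + t^2"
  have q0: "q \<noteq> 0" unfolding q_def by (metis add_pos_nonneg zero_less_one zero_le_power2 less_irrefl)
  define w where "w n = q ^ (n div 2) * v n" for n
  have Wn: "W $ n = w n / fact n" for n by (simp add: Wd w_def q_def)
  have w0: "w 0 = 1" by (simp add: w_def v0)
  have "fps_deriv W $ m = w (Suc m) / fact m"
    by (simp add: Wn field_simps del: of_nat_Suc)
  also have "\<dots> = (\<Sum>j\<le>m. q ^ ((m + 1) div 2) * (real (m choose j) * v j *
        (if m - j = 0 then 1 else if odd j then 2 * t / q else 0) * v (m - j)) / fact m)"
    unfolding w_def q_def by (simp add: vrec sum_divide_distrib sum_distrib_left)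
  also have "\<dots> = (\<Sum>j\<le>m. 2 * t * (if odd j \<and> j \<noteq> m then w j / fact j * (w (m - j) / fact (m - j)) else 0)
       + (if j = m then (if odd m then q else 1) * (w m / fact m) else 0))"
  proof (rule sum.cong[OF refl])
    fix j assume "j \<in> {..m}"
    then have jm: "j \<le> m" by simp
    have b: "real (m choose j) / fact m = 1 / (fact j * fact (m - j))" using binom_fact_real[OF jm] .
    show "q ^ ((m + 1) div 2) * (real (m choose j) * v j *
        (if m - j = 0 then 1 else if odd j then 2 * t / q else 0) * v (m - j)) / fact m =
        2 * t * (if odd j \<and> j \<noteq> m then w j / fact j * (w (m - j) / fact (m - j)) else 0)
       + (if j = m then (if odd m then q else 1) * (w m / fact m) else 0)"
    proof (cases "j = m")
      case True
      show ?thesis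
      proof (cases "odd m")
        case True
        have "q ^ ((m + 1) div 2) = q ^ (m div 2) * q" by (simp add: div2_aux2[OF True])
        then show ?thesis using \<open>j = m\<close> v0 True by (simp add: w_def)
      next
        case False
        have "q ^ ((m + 1) div 2) = q ^ (m div 2)" using False by (simp add: div2_aux3)
        then show ?thesis using \<open>j = m\<close> v0 False by (simp add: w_def)
      qed
    next
      case False
      then have jm': "j < m" using jm by simp
      show ?thesis
      proof (cases "odd j")
        case True
        have "q ^ ((m + 1) div 2) = q ^ (j div 2) * q ^ ((m - j) div 2) * q"
          by (simp add: div2_aux1[OF True jm'] power_add)
        then have "q ^ ((m + 1) div 2) * (real (m choose j) * v j * (2 * t / q) * v (m - j)) / fact m
            = 2 * t * (q ^ (j div 2) * v j) * (q ^ ((m - j) div 2) * v (m - j)) * (real (m choose j) / fact m)"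
          by (rule alg1[OF q0])
        also have "\<dots> = 2 * t * (w j / fact j * (w (m - j) / fact (m - j)))"
          using b by (simp add: w_def)
        finally show ?thesis using True jm' by simp
      next
        case False
        then show ?thesis using jm' by simp
      qed
    qed
  qed
  also have "\<dots> = 2 * t * (\<Sum>j\<le>m. (if odd j \<and> j \<noteq> m then w j / fact j * (w (m - j) / fact (m - j)) else 0))
       + (if odd m then q else 1) * (w m / fact m)"
    by (simp add: sum.distrib sum_distrib_left)
  also have "\<dots> = (fps_const (2 * t) * Po * (W - 1) + fps_const (1 + t^2) * Po + Pe) $ m"
  proof -
    have "(Po * (W - 1)) $ m = (\<Sum>j\<le>m. (if odd j \<and> j \<noteq> m then w j / fact j * (w (m - j) / fact (m - j)) else 0))"
      unfolding fps_mult_nth atLeast0AtMost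
      by (intro sum.cong refl; auto simp: Od Wn w0)
    moreover have "(fps_const (1 + t^2) * Po + Pe) $ m = (if odd m then q else 1) * (w m / fact m)"
      by (simp add: Od Ed Wn q_def)
    ultimately show ?thesis
      by (simp only: mult.assoc fps_add_nth fps_mult_left_const_nth)
  qed
  finally show "fps_deriv W $ m = (fps_const (2 * t) * Po * (W - 1) + fps_const (1 + t^2) * Po + Pe) $ m" .
qed

lemma main_fps:
  fixes t :: real and u v :: "nat \<Rightarrow> real"
  assumes u0: "u 0 = 1"
    and urec: "\<And>m. u (Suc m) = (\<Sum>j\<le>m. real (m choose j) * u j * (if m - j = 0 then 1 else t) * u (m - j))"
    and v0: "v 0 = 1"
    and vrec: "\<And>m. v (Suc m) = (\<Sum>j\<le>m. real (m choose j) * v j *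
        (if m - j = 0 then 1 else if odd j then 2 * t / (1 + t^2) else 0) * v (m - j))"
  shows "u (2*n+1) = (1+t^2)^n * v (2*n+1) \<and> u (2*n+2) = (1+t) * (1+t^2)^n * v (2*n+2)"
proof -
  define q where "q = 1 + t^2"
  have q0: "q \<noteq> 0" unfolding q_def by (metis add_pos_nonneg zero_less_one zero_le_power2 less_irrefl)
  define W where "W = Abs_fps (\<lambda>n. (1 + t^2) ^ (n div 2) * v n / fact n)"
  define Po where "Po = Abs_fps (\<lambda>n. if odd n then W $ n else 0)"
  define Pe where "Pe = Abs_fps (\<lambda>n. if even n then W $ n else 0)"
  define U where "U = Abs_fps (\<lambda>n. u n / fact n)"
  define T where "T = fps_const t"
  define Qi where "Qi = fps_const (1 / q)"
  have Wode: "fps_deriv W = fps_const (2 * t) * Po * (W - 1) + fps_const (1 + t^2) * Po + Pe"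
    by (rule W_ode[OF v0 vrec W_def Po_def Pe_def])
  have Uode: "fps_deriv U = fps_const t * U * U + fps_const (1 - t) * U"
    unfolding U_def by (rule U_ode[OF u0 urec])
  have Wsplit: "W = Po + Pe" by (rule fps_ext) (simp add: Po_def Pe_def)
  have oPo: "fod Po" by (simp add: fod_def Po_def)
  have ePe: "fev Pe" by (simp add: fev_def Pe_def)
  define c where "c = fps_const (2 * t) * Po * Po + Pe"
  define d where "d = fps_const (2 * t) * Po * (Pe - 1) + fps_const q * Po"
  have "fps_deriv Po + fps_deriv Pe = c + d"
    using Wode unfolding c_def d_def q_def Wsplit[symmetric]
    by (simp add: Wsplit algebra_simps)
  moreover have "fev c" unfolding c_def
    by (intro fev_add fod_mult fev_fod_mult fev_const oPo ePe)
  moreover have "fod d" unfolding d_def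
    by (intro fod_add fod_fev_mult fev_fod_mult fev_const oPo fev_diff ePe fev_1)
  ultimately have "fps_deriv Po = c \<and> fps_deriv Pe = d"
    by (intro fev_fod_split) (auto intro: fod_deriv[OF oPo] fev_deriv[OF ePe])
  moreover have c2: "fps_const (2*t) = 2*T" and cq: "fps_const q = 1 + T*T"
    by (simp_all add: fps_eq_iff T_def q_def power2_eq_square fps_numeral_nth)
  ultimately have dO: "fps_deriv Po = 2 * T * Po * Po + Pe"
    and dE: "fps_deriv Pe = 2 * T * Po * (Pe - 1) + (1 + T * T) * Po"
    unfolding c_def d_def by auto
  have cs: "fps_const (q^2) = (1 + T*T)*(1+T*T)" "fps_const ((1+t)^2) = (1+T)*(1+T)"
    "fps_const (2*q) = 2*(1+T*T)" "fps_const (4*t) = 4*T" "fps_const (1 - t) = 1 - T"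
    "fps_const ((1+t)/q) = (1 + T) * Qi" "Qi * (1 + T*T) = 1"
    using q0 by (simp_all add: fps_eq_iff T_def Qi_def q_def power2_eq_square field_simps fps_numeral_nth)
  define K where "K = fps_const (q^2) * Po * Po - fps_const ((1+t)^2) * (Pe - 1) * (Pe - 1) - fps_const (2*q) * (Pe - 1)"
  have Kd: "fps_deriv K = fps_const (4*t) * Po * K"
    unfolding K_def
    apply (simp only: fps_deriv_mult fps_deriv_add fps_deriv_sub fps_deriv_const fps_deriv_1 dO dE)
    apply (simp only: cs)
    apply algebra
    done
  have K0: "K $ 0 = 0" by (simp add: K_def Po_def Pe_def W_def v0)
  have "K = 0" by (rule linear_zero[OF Kd K0])
  then have Kz: "(1 + T*T)*(1+T*T) * Po * Po - (1+T)*(1+T) * (Pe - 1) * (Pe - 1) - 2*(1+T*T) * (Pe - 1) = 0"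
    unfolding K_def cs .
  define X where "X = 1 + fps_const ((1+t)/q) * (Pe - 1) + Po"
  have Xode: "fps_deriv X = fps_const t * X * X + fps_const (1 - t) * X"
    unfolding X_def
    apply (simp only: fps_deriv_mult fps_deriv_add fps_deriv_sub fps_deriv_const fps_deriv_1 dO dE)
    apply (simp only: cs T_def[symmetric])
    using Kz cs(7) apply algebra
    done
  have "U = X"
    by (rule riccati_unique[OF Uode Xode]) (simp add: U_def X_def u0 Pe_def Po_def W_def v0)
  then have UX: "U $ N = X $ N" for N by simp
  have o: "u (2*n+1) / fact (2*n+1) = (1+t^2)^n * v (2*n+1) / fact (2*n+1)"
    using UX[of "2*n+1"] by (simp add: U_def X_def Po_def Pe_def W_def)
  have e: "u (2*n+2) / fact (2*n+2) = (1+t)/q * ((1+t^2)^(n+1) * v (2*n+2)) / fact (2*n+2)"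
    using UX[of "2*n+2"] by (simp add: U_def X_def Po_def Pe_def W_def)
  have "(1+t)/q * ((1+t^2)^(n+1) * v (2*n+2)) = (1+t) * (1+t^2)^n * v (2*n+2)"
    using q0 by (simp add: q_def field_simps)
  moreover have "u (2*n+2) = (1+t)/q * ((1+t^2)^(n+1) * v (2*n+2))"
    using e by (subst (asm) divide_cancel_right) auto
  moreover have "u (2*n+1) = (1+t^2)^n * v (2*n+1)"
    using o by (subst (asm) divide_cancel_right) auto
  ultimately show ?thesis by simp
qed

lemma alt_vdm:
  "(\<Sum>i\<le>l. (-1)^i * real (M + i choose i) * real (M + 1 + K choose (l - i))) = real (K choose l)"
proof -
  have "(\<Sum>i\<le>l. (-1)^i * real (M + i choose i) * real (M + 1 + K choose (l - i)))
      = (\<Sum>i=0..l. ((- (real M + 1)) gchoose i) * ((real M + 1 + real K) gchoose (l - i)))"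
  proof (rule sum.cong)
    fix i assume "i \<in> {0..l}"
    have "((- (real M + 1)) gchoose i) = (-1)^i * ((real M + 1 + of_nat i - 1) gchoose i)"
      by (rule gbinomial_minus)
    also have "real M + 1 + of_nat i - 1 = real (M + i)" by simp
    finally have a: "((- (real M + 1)) gchoose i) = (-1)^i * real (M + i choose i)"
      by (simp add: binomial_gbinomial)
    have "real (M + 1 + K choose (l - i)) = (real (M + 1 + K) gchoose (l - i))"
      by (rule binomial_gbinomial)
    also have "real (M + 1 + K) = real M + 1 + real K" by simp
    finally have b: "((real M + 1 + real K) gchoose (l - i)) = real (M + 1 + K choose (l - i))" by simp
    show "(-1)^i * real (M + i choose i) * real (M + 1 + K choose (l - i)) =
      ((- (real M + 1)) gchoose i) * ((real M + 1 + real K) gchoose (l - i))" by (simp only: a b mult.assoc)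
  qed (auto simp: atLeast0AtMost)
  also have "\<dots> = ((- (real M + 1)) + (real M + 1 + real K)) gchoose l"
    by (rule gbinomial_Vandermonde)
  also have "\<dots> = real (K choose l)" by (simp add: binomial_gbinomial)
  finally show ?thesis .
qed

lemma coef_split:
  "coef M i = real (M + i choose i) + (if i = 0 then 0 else real (M + i - 1 choose (i - 1)))"
proof (cases "M + i = 0")
  case True then show ?thesis by (simp add: coef_def)
next
  case False
  show ?thesis
  proof (cases "i = 0")
    case True then show ?thesis using False by (simp add: coef_def)
  next
    case i: False
    have h: "real i * real (M + i choose i) = real (M + i) * real (M + i - 1 choose (i - 1))"
      using times_binomial_minus1_eq[of i "M + i"] i by (metis of_nat_mult gr0I)
    have nz: "real (M + i) \<noteq> 0" using False by (simp del: of_nat_add)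
    have "real (M + i - 1 choose (i - 1)) = real i * real (M + i choose i) / real (M + i)"
      unfolding h using nz by (simp del: of_nat_add)
    then show ?thesis using False i unfolding coef_def by (simp add: field_simps)
  qed
qed

lemma coef_inv:
  "(\<Sum>i\<le>l. (-1)^i * coef M i * real (M + 2*l choose (l - i))) = (if l = 0 then 1 else 0)"
proof (cases "l = 0")
  case True then show ?thesis by (simp add: coef_def)
next
  case False
  then obtain l' where l: "l = Suc l'" by (cases l) auto
  have s1: "(\<Sum>i\<le>l. (-1)^i * real (M + i choose i) * real (M + 2*l choose (l - i))) = real (2*l' + 1 choose l)"
    using alt_vdm[where l=l and M=M and K="2*l'+1"] l by (simp add: algebra_simps)
  have "(\<Sum>i\<le>l. (-1)^i * (if i = 0 then 0 else real (M + i - 1 choose (i - 1))) * real (M + 2*l choose (l - i)))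
      = (\<Sum>i\<le>l'. (-1)^(Suc i) * real (M + i choose i) * real (M + 2*l choose (l' - i)))"
    unfolding l atMost_Suc_eq_insert_0 by (simp add: sum.reindex)
  also have "\<dots> = - (\<Sum>i\<le>l'. (-1)^i * real (M + i choose i) * real (M + 1 + (2*l'+1) choose (l' - i)))"
    by (simp add: sum_negf[symmetric] l algebra_simps)
  also have "\<dots> = - real (2*l' + 1 choose l')" by (simp only: alt_vdm)
  finally have s2: "(\<Sum>i\<le>l. (-1)^i * (if i = 0 then 0 else real (M + i - 1 choose (i - 1))) * real (M + 2*l choose (l - i)))
      = - real (2*l' + 1 choose l')" .
  have sym: "(2*l' + 1 choose l) = (2*l'+1 choose l')"
    using binomial_symmetric[of l' "2*l'+1"] l by simp
  have "(\<Sum>i\<le>l. (-1)^i * coef M i * real (M + 2*l choose (l - i)))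
     = (\<Sum>i\<le>l. (-1)^i * real (M + i choose i) * real (M + 2*l choose (l - i)))
     + (\<Sum>i\<le>l. (-1)^i * (if i = 0 then 0 else real (M + i - 1 choose (i - 1))) * real (M + 2*l choose (l - i)))"
    unfolding coef_split by (simp add: sum.distrib[symmetric] algebra_simps)
  then show ?thesis using s1 s2 sym False by simp
qed

definition pc :: "(nat \<Rightarrow> real) \<Rightarrow> nat \<Rightarrow> nat \<Rightarrow> real" where
  "pc b n m = (\<Sum>k\<le>n. \<Sum>j\<le>n. if k + 2*j = m then b k * real (n - k choose j) else 0)"

lemma poly_expand:
  fixes b :: "nat \<Rightarrow> real" and t :: real
  assumes M: "2*n \<le> M"
  shows "(\<Sum>k\<le>n. b k * t^k * (1+t^2)^(n-k)) = (\<Sum>m\<le>M. pc b n m * t^m)"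
proof -
  have bin: "(1+t^2)^(n-k) = (\<Sum>j\<le>n. real (n - k choose j) * t^(2*j))" if "k \<le> n" for k
  proof -
    have "(1+t^2)^(n-k) = (t^2 + 1)^(n-k)" by (simp add: add.commute)
    also have "\<dots> = (\<Sum>j\<le>n-k. real (n - k choose j) * t^(2*j))"
      by (subst binomial_ring) (simp add: power_mult)
    also have "\<dots> = (\<Sum>j\<le>n. real (n - k choose j) * t^(2*j))"
      by (rule sum.mono_neutral_left) auto
    finally show ?thesis .
  qed
  have "(\<Sum>k\<le>n. b k * t^k * (1+t^2)^(n-k)) = (\<Sum>k\<le>n. \<Sum>j\<le>n. b k * real (n - k choose j) * t^(k + 2*j))"
    by (intro sum.cong refl) (simp add: bin sum_distrib_left power_add mult_ac)
  also have "\<dots> = (\<Sum>k\<le>n. \<Sum>j\<le>n. \<Sum>m\<le>M. (if k + 2*j = m then b k * real (n - k choose j) else 0) * t^m)"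
  proof (intro sum.cong refl)
    fix k j assume k: "k \<in> {..n}" and j: "j \<in> {..n}"
    have "(\<Sum>m\<le>M. (if k + 2*j = m then b k * real (n - k choose j) else 0) * t^m)
        = (\<Sum>m\<le>M. if k + 2*j = m then b k * real (n - k choose j) * t^m else 0)"
      by (intro sum.cong refl) auto
    also have "\<dots> = (if k + 2*j \<in> {..M} then b k * real (n - k choose j) * t^(k+2*j) else 0)"
      by (rule sum.delta') simp
    also have "\<dots> = b k * real (n - k choose j) * t^(k+2*j)"
    proof (cases "k + 2*j \<le> M")
      case False then have "n - k < j" using M k by auto
      then show ?thesis using False by simp
    qed simp
    finally show "b k * real (n - k choose j) * t^(k + 2*j) =
       (\<Sum>m\<le>M. (if k + 2*j = m then b k * real (n - k choose j) else 0) * t^m)" by simp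
  qed
  also have "\<dots> = (\<Sum>m\<le>M. pc b n m * t^m)"
    unfolding pc_def sum_distrib_right
    by (subst sum.swap) (subst (2) sum.swap, rule refl)
  finally show ?thesis .
qed

lemma pc_extract:
  fixes A b :: "nat \<Rightarrow> real"
  assumes M: "2*n \<le> M"
    and eq: "\<And>t. (\<Sum>m\<le>M. A m * t^m) = (\<Sum>k\<le>n. b k * t^k * (1+t^2)^(n-k))"
  shows "\<And>m. m \<le> M \<Longrightarrow> A m = pc b n m"
proof -
  have "\<forall>t. (\<Sum>m\<le>M. A m * t^m) = (\<Sum>m\<le>M. pc b n m * t^m)"
    using eq poly_expand[OF M] by simp
  then show "\<And>m. m \<le> M \<Longrightarrow> A m = pc b n m" using polyfun_eq_coeffs by blast
qed

lemma inv_main: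
  fixes A b :: "nat \<Rightarrow> real"
  assumes k: "k \<le> n" and A: "\<And>m. m \<le> n \<Longrightarrow> A m = pc b n m"
  shows "b k = (\<Sum>i = 0..k div 2. (-1)^i * coef (n - k) i * A (k - 2*i))"
proof -
  have "(\<Sum>i = 0..k div 2. (-1)^i * coef (n - k) i * A (k - 2*i))
     = (\<Sum>i = 0..k div 2. (-1)^i * coef (n - k) i *
          (\<Sum>k'\<le>n. \<Sum>j\<le>n. if k' + 2*j = k - 2*i then b k' * real (n - k' choose j) else 0))"
    by (intro sum.cong refl) (use k in \<open>simp add: A pc_def\<close>)
  also have "\<dots> = (\<Sum>k'\<le>n. b k' * (\<Sum>i = 0..k div 2. \<Sum>j\<le>n.
        if k' + 2*j = k - 2*i then (-1)^i * coef (n - k) i * real (n - k' choose j) else 0))"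
    unfolding sum_distrib_left
    by (subst sum.swap) (intro sum.cong refl, auto simp: mult_ac)
  also have "\<dots> = (\<Sum>k'\<le>n. b k' * (if k' = k then 1 else 0))"
  proof (intro sum.cong refl arg_cong2[where f="(*)"])
    fix k' assume k': "k' \<in> {..n}"
    show "(\<Sum>i = 0..k div 2. \<Sum>j\<le>n.
        if k' + 2*j = k - 2*i then (-1)^i * coef (n - k) i * real (n - k' choose j) else 0)
        = (if k' = k then 1 else 0)"
    proof (cases "k' \<le> k \<and> even (k - k')")
      case False
      have "(\<Sum>i = 0..k div 2. \<Sum>j\<le>n.
        if k' + 2*j = k - 2*i then (-1)^i * coef (n - k) i * real (n - k' choose j) else 0) = 0"
      proof (intro sum.neutral ballI)
        fix i j assume "i \<in> {0..k div 2}" "j \<in> {..n}"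
        then have "2*i \<le> k" by auto
        have "k' + 2*j \<noteq> k - 2*i"
        proof
          assume h: "k' + 2*j = k - 2*i"
          then have "k' \<le> k" "k - k' = 2*(i+j)" using \<open>2*i \<le> k\<close> by auto
          then show False using False by auto
        qed
        then show "(if k' + 2*j = k - 2*i then (-1)^i * coef (n - k) i * real (n - k' choose j) else 0) = 0"
          by simp
      qed
      moreover have "k' \<noteq> k" using False by auto
      ultimately show ?thesis by simp
    next
      case True
      then obtain l where l: "k = k' + 2*l" by (metis dvd_def le_add_diff_inverse evenE)
      have lk: "l \<le> k div 2" using l by simp
      have "(\<Sum>i = 0..k div 2. \<Sum>j\<le>n.
        if k' + 2*j = k - 2*i then (-1)^i * coef (n - k) i * real (n - k' choose j) else 0)
        = (\<Sum>i = 0..k div 2. if i \<le> l then (-1)^i * coef (n - k) i * real (n - k' choose (l - i)) else 0)"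
      proof (rule sum.cong[OF refl])
        fix i assume i: "i \<in> {0..k div 2}"
        have "(\<Sum>j\<le>n. if k' + 2*j = k - 2*i then (-1)^i * coef (n - k) i * real (n - k' choose j) else 0)
           = (\<Sum>j\<le>n. if (if i \<le> l then l - i else Suc n) = j then (-1)^i * coef (n - k) i * real (n - k' choose j) else 0)"
          by (intro sum.cong refl) (use i l in auto)
        also have "\<dots> = (if i \<le> l then (-1)^i * coef (n - k) i * real (n - k' choose (l - i)) else 0)"
          using l k by (subst sum.delta') auto
        finally show "(\<Sum>j\<le>n. if k' + 2*j = k - 2*i then (-1)^i * coef (n - k) i * real (n - k' choose j) else 0)
           = (if i \<le> l then (-1)^i * coef (n - k) i * real (n - k' choose (l - i)) else 0)" .
      qed
      also have "\<dots> = (\<Sum>i\<in>{0..k div 2} \<inter> {..l}. (-1)^i * coef (n - k) i * real (n - k' choose (l - i)))"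
        by (simp only: sum.inter_restrict[OF finite_atLeastAtMost] atMost_iff)
      also have "{0..k div 2} \<inter> {..l} = {..l}" using lk by auto
      also have "(\<Sum>i\<le>l. (-1)^i * coef (n - k) i * real (n - k' choose (l - i))) = (if l = 0 then 1 else 0)"
      proof -
        have "n - k' = (n - k) + 2*l" using l k by simp
        then show ?thesis using coef_inv[where l=l and M="n - k"] by simp
      qed
      finally show ?thesis using l by simp
    qed
  qed
  also have "\<dots> = (\<Sum>k'\<le>n. if k' = k then b k' else 0)" by (intro sum.cong refl) auto
  also have "\<dots> = b k" using k by (subst sum.delta) auto
  finally show ?thesis by simp
qed

lemma desc_card_le:
  assumes xs: "xs \<in> permutations_of_set {1..N}" and ev: "\<forall>i\<in>descents xs. even i" and N: "N \<le> 2*n+2"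
  shows "card (descents xs) \<le> n"
proof -
  have len: "length xs = N" using length_finite_permutations_of_set[OF xs] by simp
  have "descents xs \<subseteq> (\<lambda>j. 2*j) ` {1..n}"
  proof
    fix i assume i: "i \<in> descents xs"
    then have "1 \<le> i" "i < N" "even i" using descents_sub[of xs] len ev by auto
    then show "i \<in> (\<lambda>j. 2*j) ` {1..n}" using N by (intro image_eqI[of _ _ "i div 2"]) auto
  qed
  then have "card (descents xs) \<le> card ((\<lambda>j. 2*j) ` {1..n})" by (intro card_mono) auto
  also have "\<dots> \<le> card {1..n}" by (rule card_image_le) simp
  finally show ?thesis by simp
qed

lemma even_desc_0: "N \<le> 2*n+2 \<Longrightarrow> n < k \<Longrightarrow> even_desc N k = 0"
  unfolding even_desc_def using desc_card_le by fastforce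

lemma reduce_sum:
  fixes a :: "nat \<Rightarrow> real" and t :: real
  assumes z: "\<And>k. n < k \<Longrightarrow> a k = 0" and nN: "n \<le> N"
  shows "(1+t^2)^n * (\<Sum>k\<le>N. a k * (2*t/(1+t^2))^k) = (\<Sum>k\<le>n. (2^k * a k) * t^k * (1+t^2)^(n-k))"
proof -
  have q0: "(1+t^2) \<noteq> 0" by (metis add_pos_nonneg zero_less_one zero_le_power2 less_irrefl)
  have "(\<Sum>k\<le>N. a k * (2*t/(1+t^2))^k) = (\<Sum>k\<le>n. a k * (2*t/(1+t^2))^k)"
    by (rule sum.mono_neutral_right) (use z nN in auto)
  then have "(1+t^2)^n * (\<Sum>k\<le>N. a k * (2*t/(1+t^2))^k) = (\<Sum>k\<le>n. (1+t^2)^n * (a k * (2*t/(1+t^2))^k))"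
    by (simp add: sum_distrib_left)
  also have "\<dots> = (\<Sum>k\<le>n. (2^k * a k) * t^k * (1+t^2)^(n-k))"
  proof (intro sum.cong refl)
    fix k assume "k \<in> {..n}"
    then have "(1+t^2)^n = (1+t^2)^k * (1+t^2)^(n-k)" by (simp add: power_add[symmetric])
    then show "(1+t^2)^n * (a k * (2*t/(1+t^2))^k) = (2^k * a k) * t^k * (1+t^2)^(n-k)"
      using q0 by (simp add: power_divide power_mult_distrib field_simps)
  qed
  finally show ?thesis .
qed

lemma shift_sum:
  fixes p :: "nat \<Rightarrow> real"
  shows "(1 + t) * (\<Sum>m\<le>M. p m * t^m) =
    (\<Sum>m\<le>Suc M. ((if m \<le> M then p m else 0) + (if m = 0 then 0 else p (m - 1))) * t^m)"
proof -
  have a: "(\<Sum>m\<le>Suc M. (if m \<le> M then p m else 0) * t^m) = (\<Sum>m\<le>M. p m * t^m)"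
    by (simp add: atMost_Suc)
  have b: "(\<Sum>m\<le>Suc M. (if m = 0 then 0 else p (m - 1)) * t^m) = t * (\<Sum>m\<le>M. p m * t^m)"
    by (simp add: sum.atMost_Suc_shift sum_distrib_left mult_ac del: sum.atMost_Suc)
  show ?thesis unfolding distrib_right sum.distrib a b by (simp add: algebra_simps)
qed

lemma alt_rec:
  fixes A p :: "nat \<Rightarrow> real"
  assumes A0: "A 0 = p 0" and AS: "\<And>m. Suc m \<le> L \<Longrightarrow> A (Suc m) = p (Suc m) + p m"
  shows "m \<le> L \<Longrightarrow> p m = (\<Sum>r\<le>m. (-1)^r * A (m - r))"
proof (induction m)
  case 0 then show ?case using A0 by simp
next
  case (Suc m)
  have "p (Suc m) = A (Suc m) - p m" using AS[OF Suc.prems] by simp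
  also have "\<dots> = A (Suc m) - (\<Sum>r\<le>m. (-1)^r * A (m - r))" using Suc by simp
  also have "\<dots> = (\<Sum>r\<le>Suc m. (-1)^r * A (Suc m - r))"
    by (simp add: sum.atMost_Suc_shift sum_negf[symmetric] del: sum.atMost_Suc)
  finally show ?case .
qed

lemma triple_sum:
  fixes F :: "nat \<Rightarrow> nat \<Rightarrow> nat \<Rightarrow> real"
  shows "(\<Sum>(i,j,r) \<in> {(i,j,r). 2*i + j + r = k}. F i j r) = (\<Sum>i=0..k div 2. \<Sum>r\<le>k - 2*i. F i (k - 2*i - r) r)"
proof -
  define g where "g = (\<lambda>(i::nat, r::nat). (i, k - 2*i - r, r))"
  define S where "S = Sigma {0..k div 2} (\<lambda>i. {..k - 2*i})"
  have img: "{(i,j,r). 2*i + j + r = k} = g ` S"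
  proof
    show "{(i,j,r). 2*i + j + r = k} \<subseteq> g ` S"
    proof
      fix x assume "x \<in> {(i,j,r). 2*i + j + r = k}"
      then obtain i j r where x: "x = (i,j,r)" "2*i + j + r = k" by auto
      then have "(i, r) \<in> S" "x = g (i, r)" unfolding S_def g_def by auto
      then show "x \<in> g ` S" by blast
    qed
    show "g ` S \<subseteq> {(i,j,r). 2*i + j + r = k}" unfolding S_def g_def by auto
  qed
  have inj: "inj_on g S" unfolding g_def by (auto intro!: inj_onI)
  have "(\<Sum>(i,j,r) \<in> {(i,j,r). 2*i + j + r = k}. F i j r) = (\<Sum>x\<in>S. (\<lambda>(i,j,r). F i j r) (g x))"
    unfolding img sum.reindex[OF inj] by (simp add: comp_def)
  also have "\<dots> = (\<Sum>(i,r)\<in>S. F i (k - 2*i - r) r)"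
    by (intro sum.cong refl) (auto simp: g_def)
  also have "\<dots> = (\<Sum>i=0..k div 2. \<Sum>r\<le>k - 2*i. F i (k - 2*i - r) r)"
    unfolding S_def by (subst sum.Sigma[symmetric]) auto
  finally show ?thesis .
qed

lemma poly_odd:
  "(\<Sum>m\<le>2*n+1. real (eulerian (2*n+1) m) * t^m) =
   (\<Sum>k\<le>n. (2^k * real (even_desc (2*n+1) k)) * t^k * (1+t^2)^(n-k))"
proof -
  have mf: "cnt (wA t) (2*n+1) = (1+t^2)^n * cnt (wa (2*t/(1+t^2))) (2*n+1)"
    using main_fps[where u="cnt (wA t)" and v="cnt (wa (2*t/(1+t^2)))" and t=t and n=n]
    by (simp add: cnt_0 wA_def wa_def cnt_A_rec cnt_a_rec del: cnt_def)
  show ?thesis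
    unfolding eulerian_poly[symmetric] mf even_desc_poly
    by (rule reduce_sum) (use even_desc_0[of _ n] in auto)
qed

lemma poly_even:
  "(\<Sum>m\<le>2*n+2. real (eulerian (2*n+2) m) * t^m) =
   (1 + t) * (\<Sum>k\<le>n. (2^k * real (even_desc (2*n+2) k)) * t^k * (1+t^2)^(n-k))"
proof -
  have mf: "cnt (wA t) (2*n+2) = (1 + t) * ((1+t^2)^n * cnt (wa (2*t/(1+t^2))) (2*n+2))"
    using main_fps[where u="cnt (wA t)" and v="cnt (wa (2*t/(1+t^2)))" and t=t and n=n]
    by (simp add: cnt_0 wA_def wa_def cnt_A_rec cnt_a_rec del: cnt_def)
  show ?thesis
    unfolding eulerian_poly[symmetric] mf even_desc_poly
    by (subst reduce_sum) (use even_desc_0[of _ n] in auto)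
qed

lemma half_aux: "(2::real)^k * x = S \<Longrightarrow> x = 1 / 2^k * S"
  by (simp add: field_simps)

theorem corollary3p3:
  fixes n k :: nat
  assumes "k \<le> n"
  shows "real (even_desc (2*n+1) k) =
           (1 / 2^k) * (\<Sum>i = 0..k div 2. (-1)^i * coef (n - k) i * real (eulerian (2*n+1) (k - 2*i)))
         \<and> real (even_desc (2*n+2) k) =
           (1 / 2^k) * (\<Sum>(i,j,r) \<in> {(i,j,r). 2*i + j + r = k}.
               (-1)^(r+i) * coef (n - k) i * real (eulerian (2*n+2) j))"
proof
  define b where "b k = 2^k * real (even_desc (2*n+1) k)" for k
  have eq: "\<And>t. (\<Sum>m\<le>2*n+1. real (eulerian (2*n+1) m) * t^m) = (\<Sum>k\<le>n. b k * t^k * (1+t^2)^(n-k))"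
    unfolding b_def by (rule poly_odd)
  have A: "real (eulerian (2*n+1) m) = pc b n m" if "m \<le> n" for m
    by (rule pc_extract[OF _ eq]) (use that in auto)
  have "b k = (\<Sum>i = 0..k div 2. (-1)^i * coef (n - k) i * real (eulerian (2*n+1) (k - 2*i)))"
    by (rule inv_main[OF assms]) (rule A)
  then show "real (even_desc (2*n+1) k) =
           (1 / 2^k) * (\<Sum>i = 0..k div 2. (-1)^i * coef (n - k) i * real (eulerian (2*n+1) (k - 2*i)))"
    unfolding b_def by (rule half_aux)
next
  define b where "b k = 2^k * real (even_desc (2*n+2) k)" for k
  define E where "E m = real (eulerian (2*n+2) m)" for m
  define p where "p m = pc b n m" for m
  define D where "D m = (if m \<le> 2*n+1 then p m else 0) + (if m = 0 then 0 else p (m - 1))" for m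
  have eqt: "(\<Sum>m\<le>Suc (2*n+1). E m * t^m) = (\<Sum>m\<le>Suc (2*n+1). D m * t^m)" for t
  proof -
    have "(\<Sum>m\<le>Suc (2*n+1). E m * t^m) = (1 + t) * (\<Sum>k\<le>n. b k * t^k * (1+t^2)^(n-k))"
      using poly_even[of n t] unfolding E_def b_def by simp
    also have "\<dots> = (1 + t) * (\<Sum>m\<le>2*n+1. p m * t^m)"
      unfolding p_def by (subst poly_expand[of n "2*n+1"]) auto
    also have "\<dots> = (\<Sum>m\<le>Suc (2*n+1). D m * t^m)"
      unfolding D_def by (rule shift_sum)
    finally show ?thesis .
  qed
  have Ecoef: "E m = (if m \<le> 2*n+1 then p m else 0) + (if m = 0 then 0 else p (m - 1))" if "m \<le> Suc (2*n+1)" for m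
  proof -
    have "\<forall>i\<le>Suc (2*n+1). E i = D i" using eqt polyfun_eq_coeffs[of E "Suc (2*n+1)" D] by blast
    then show ?thesis using that unfolding D_def by blast
  qed
  have palt: "p m = (\<Sum>r\<le>m. (-1)^r * E (m - r))" if "m \<le> 2*n+1" for m
  proof (rule alt_rec[of E p "2*n+1"])
    show "E 0 = p 0" using Ecoef[of 0] by simp
    show "E (Suc m) = p (Suc m) + p m" if "Suc m \<le> 2*n+1" for m
      using Ecoef[of "Suc m"] that by simp
  qed (use that in simp)
  have "b k = (\<Sum>i = 0..k div 2. (-1)^i * coef (n - k) i * p (k - 2*i))"
    by (rule inv_main[OF assms]) (simp add: p_def)
  also have "\<dots> = (\<Sum>i = 0..k div 2. \<Sum>r\<le>k - 2*i. (-1)^(r+i) * coef (n - k) i * E (k - 2*i - r))"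
  proof (intro sum.cong refl)
    fix i assume "i \<in> {0..k div 2}"
    have "p (k - 2*i) = (\<Sum>r\<le>k - 2*i. (-1)^r * E (k - 2*i - r))" using assms by (intro palt) simp
    then show "(-1)^i * coef (n - k) i * p (k - 2*i) = (\<Sum>r\<le>k - 2*i. (-1)^(r+i) * coef (n - k) i * E (k - 2*i - r))"
      by (simp add: sum_distrib_left power_add mult_ac)
  qed
  also have "\<dots> = (\<Sum>(i,j,r) \<in> {(i,j,r). 2*i + j + r = k}. (-1)^(r+i) * coef (n - k) i * E j)"
    by (rule triple_sum[symmetric])
  finally show "real (even_desc (2*n+2) k) =
           (1 / 2^k) * (\<Sum>(i,j,r) \<in> {(i,j,r). 2*i + j + r = k}.
               (-1)^(r+i) * coef (n - k) i * real (eulerian (2*n+2) j))"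
    unfolding b_def E_def by (rule half_aux)
qed

end
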